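(* Consider the following private response scheme. Fix a privacy parameter $\epsilon>0$, a response budget $K\in\mathbb{Z}_{\ge 1}$, and $P\in\mathbb{Z}_{\ge 1}$. There is a finite list of candidate patterns $\mathcal{C}_t(1),\dots,\mathcal{C}_t(|\mathcal{C}_t|)$, and each candidate is assigned to exactly $P$ distinct data owners; each data owner is assigned at most $K$ candidates in total (and never the same candidate twice). Data owner $j$, holding local data $d_j$, forms a vector $R_j\in\mathbb{Z}^{|\mathcal{C}_t|}$ with $$R_j[i]=\begin{cases}0 & \text{if } j \text{ is not assigned } \mathcal{C}_t(i),\\ \mathcal{X}_{j,i}-\mathcal{Y}_{j,i} & \text{if } j \text{ is assigned } \mathcal{C}_t(i) \text{ and } \mathcal{C}_t(i)\notin d_j,\\ 1+\mathcal{X}_{j,i}-\mathcal{Y}_{j,i} & \text{if } j \text{ is assigned } \mathcal{C}_t(i) \text{ and } \mathcal{C}_t(i)\in d_j,\end{cases}$$ where all $\mathcal{X}_{j,i},\mathcal{Y}_{j,i}$ are mutually independent random variables with the Pólya$(1/P,\,e^{-\epsilon/K})$ distribution. The vectors $R_j$ are uploaded via secure aggregation, so that the data analyst learns only the sum $\sum_j R_j$. Then this scheme satisfies $\epsilon$-distributed differential privacy for every data owner; that is, the released aggregate $\sum_j R_j$ satisfies $\epsilon$-differential privacy with respect to changing the local data $d_j$ of any single data owner $j$.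
   Context: The Pólya$(r,p)$ distribution ($r>0$, $p\in(0,1)$) has probability mass function $\mathbb{P}(\mathcal{X}=x)=\binom{r+x-1}{r-1}p^x(1-p)^r$ for $x\in\mathbb{Z}_{\ge 0}$. A two-sided geometric random variable $G(\alpha)$, $\alpha\in(0,1)$, has $\mathbb{P}(G(\alpha)=x)=\frac{1-\alpha}{1+\alpha}\alpha^{|x|}$ for $x\in\mathbb{Z}$. A randomized mechanism $M$ satisfies $\epsilon$-differential privacy if for all neighbouring inputs $S,S'$ and all sets $O$ of outputs, $\mathbb{P}(M(S)\in O)\le e^{\epsilon}\mathbb{P}(M(S')\in O)$. "Distributed differential privacy" means: individual uploads are hidden by secure aggregation (the analyst only sees their sum), and the aggregated sum satisfies (central) differential privacy. The notation $\mathcal{C}_t(i)\in d_j$ means that candidate pattern $\mathcal{C}_t(i)$ is contained in data owner $j$'s local data (e.g. the itemset or subsequence occurs in it). *)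

theory Defs
  imports "HOL-Probability.Probability"
begin

text \<open>Polya(r,p) distribution on the naturals:
  P(X = x) = binom(r+x-1, r-1) p^x (1-p)^r, where the generalized binomial
  coefficient binom(r+x-1, r-1) = binom(r+x-1, x) = (r+x-1 gchoose x).\<close>
definition polya_pmf :: "real \<Rightarrow> real \<Rightarrow> nat pmf" where
  "polya_pmf r p = embed_pmf (\<lambda>x. ((r + real x - 1) gchoose x) * p ^ x * (1 - p) powr r)"

text \<open>Data owners are the elements of the finite set J; candidates are indexed by i < n;
  asg j i means owner j is assigned candidate i; cand i is the pattern C_t(i);
  occurs c dj means pattern c is occurs in local data dj; d j is owner j's local data.\<close>
definition scheme_output ::
  "real \<Rightarrow> nat \<Rightarrow> nat \<Rightarrow> 'o set \<Rightarrow> nat \<Rightarrow> ('o \<Rightarrow> nat \<Rightarrow> bool)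
   \<Rightarrow> (nat \<Rightarrow> 'c) \<Rightarrow> ('c \<Rightarrow> 'd \<Rightarrow> bool) \<Rightarrow> ('o \<Rightarrow> 'd) \<Rightarrow> (nat \<Rightarrow> int) pmf" where
  "scheme_output \<epsilon> K P J n asg cand occurs d =
     map_pmf
       (\<lambda>N. \<lambda>i. if i < n then
                 (\<Sum>j\<in>J. if asg j i then
                    (if occurs (cand i) (d j) then 1 else 0)
                    + int (fst (N (j, i))) - int (snd (N (j, i)))
                  else 0)
               else 0)
       (Pi_pmf {(j, i). j \<in> J \<and> i < n \<and> asg j i} (0, 0)
          (\<lambda>_. pair_pmf (polya_pmf (1 / real P) (exp (- \<epsilon> / real K)))
                         (polya_pmf (1 / real P) (exp (- \<epsilon> / real K)))))"

end

theory Submission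
  imports Defs "HOL-Computational_Algebra.Formal_Power_Series"
begin

lemma polya_coef_nonneg:
  assumes "r > 0"
  shows "((r + real x - 1) gchoose x) \<ge> 0"
proof -
  have "((r + real x - 1) gchoose x) = pochhammer r x / fact x"
    by (subst gbinomial_pochhammer') (simp add: algebra_simps)
  also have "\<dots> \<ge> 0" using pochhammer_pos[OF assms, of x] by simp
  finally show ?thesis .
qed

lemma polya_sums:
  fixes r p :: real
  assumes "r > 0" "0 < p" "p < 1"
  shows "(\<lambda>x. ((r + real x - 1) gchoose x) * p ^ x * (1 - p) powr r) sums 1"
proof -
  have "\<bar>-p\<bar> < 1" using assms by simp
  from gen_binomial_real[OF this, of "-r"]
  have "(\<lambda>n. ((-r) gchoose n) * (-p)^n) sums (1 + -p) powr (-r)" .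
  moreover have "((-r) gchoose n) * (-p)^n = ((r + real n - 1) gchoose n) * p ^ n" for n
    by (simp add: gbinomial_minus power_minus[of p] algebra_simps)
  ultimately have "(\<lambda>n. ((r + real n - 1) gchoose n) * p ^ n) sums (1 - p) powr (-r)"
    by simp
  from sums_mult2[OF this, of "(1-p) powr r"]
  show ?thesis using assms by (simp add: powr_minus field_simps)
qed

lemma pmf_polya:
  fixes r p :: real
  assumes "r > 0" "0 < p" "p < 1"
  shows "pmf (polya_pmf r p) x = ((r + real x - 1) gchoose x) * p ^ x * (1 - p) powr r"
  unfolding polya_pmf_def
proof (rule pmf_embed_pmf)
  show "0 \<le> ((r + real x - 1) gchoose x) * p ^ x * (1 - p) powr r" for x
    using polya_coef_nonneg[OF assms(1)] assms by simp
  then show "(\<integral>\<^sup>+ x. ennreal (((r + real x - 1) gchoose x) * p ^ x * (1 - p) powr r) \<partial>count_space UNIV) = 1"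
    using polya_sums[OF assms] by (simp add: nn_integral_count_space_nat suminf_ennreal_eq) (simp add: sums_iff)
qed

lemma gchoose_neg_alt:
  fixes a :: real
  shows "((a + real k - 1) gchoose k) = (-1)^k * ((-a) gchoose k)"
  by (simp add: gbinomial_minus)

lemma polya_coef_conv:
  fixes r s :: real
  shows "(\<Sum>k\<in>{0..x}. ((r + real k - 1) gchoose k) * ((s + real (x - k) - 1) gchoose (x - k)))
         = ((r + s + real x - 1) gchoose x)"
proof -
  have "(\<Sum>k\<in>{0..x}. ((r + real k - 1) gchoose k) * ((s + real (x - k) - 1) gchoose (x - k)))
      = (\<Sum>k\<in>{0..x}. (-1)^x * (((-r) gchoose k) * ((-s) gchoose (x - k))))"
  proof (rule sum.cong)
    fix k assume "k \<in> {0..x}"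
    then have "(-1::real)^k * (-1)^(x-k) = (-1)^x"
      by (simp add: power_add[symmetric])
    then show "((r + real k - 1) gchoose k) * ((s + real (x - k) - 1) gchoose (x - k))
          = (-1)^x * (((-r) gchoose k) * ((-s) gchoose (x - k)))"
      by (simp only: gchoose_neg_alt) (metis (no_types, lifting) mult.assoc mult.left_commute)
  qed simp
  also have "\<dots> = (-1)^x * ((-r + -s) gchoose x)"
    by (simp add: sum_distrib_left[symmetric] gbinomial_Vandermonde)
  also have "\<dots> = ((r + s + real x - 1) gchoose x)"
    by (simp add: gchoose_neg_alt[of "r+s"])
  finally show ?thesis .
qed

lemma polya_conv:
  fixes r s p :: real
  assumes "r > 0" "s > 0" "0 < p" "p < 1"
  shows "map_pmf (\<lambda>(a,b). a + b) (pair_pmf (polya_pmf r p) (polya_pmf s p)) = polya_pmf (r + s) p"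
proof (rule pmf_eqI)
  fix x :: nat
  have pre: "(\<lambda>(a,b). a + b) -` {x} = (\<lambda>k. (k, x - k)) ` {0..x}"
    by (auto simp: image_iff intro!: bexI[where x="fst _"])
  have inj: "inj_on (\<lambda>k. (k, x - k)) {0..x}" by (auto simp: inj_on_def)
  have "pmf (map_pmf (\<lambda>(a,b). a + b) (pair_pmf (polya_pmf r p) (polya_pmf s p))) x
      = (\<Sum>k\<in>{0..x}. pmf (polya_pmf r p) k * pmf (polya_pmf s p) (x - k))"
    by (simp add: pmf_map pre measure_measure_pmf_finite sum.reindex[OF inj] pmf_pair)
  also have "\<dots> = (\<Sum>k\<in>{0..x}. (((r + real k - 1) gchoose k) * ((s + real (x - k) - 1) gchoose (x - k)))
                      * (p ^ x * ((1 - p) powr r * (1 - p) powr s)))"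
  proof (rule sum.cong)
    fix k assume "k \<in> {0..x}"
    then have "p ^ k * p ^ (x - k) = p ^ x" by (simp add: power_add[symmetric])
    then show "pmf (polya_pmf r p) k * pmf (polya_pmf s p) (x - k) =
       (((r + real k - 1) gchoose k) * ((s + real (x - k) - 1) gchoose (x - k)))
                      * (p ^ x * ((1 - p) powr r * (1 - p) powr s))"
      using assms by (simp add: pmf_polya)
  qed simp
  also have "\<dots> = ((r + s + real x - 1) gchoose x) * p ^ x * (1 - p) powr (r + s)"
    by (simp only: sum_distrib_right[symmetric] polya_coef_conv) (simp add: powr_add)
  also have "\<dots> = pmf (polya_pmf (r + s) p) x"
    using assms by (simp add: pmf_polya)
  finally show "pmf (map_pmf (\<lambda>(a,b). a + b) (pair_pmf (polya_pmf r p) (polya_pmf s p))) x = pmf (polya_pmf (r + s) p) x" .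
qed

lemma pmf_polya_one:
  fixes p :: real
  assumes "0 < p" "p < 1"
  shows "pmf (polya_pmf 1 p) x = p ^ x * (1 - p)"
proof -
  have "(1 + real x - 1 gchoose x) = 1"
    using binomial_gbinomial[of x x, where 'a=real] by simp
  then show ?thesis using assms by (simp add: pmf_polya)
qed

lemma pair_regroup:
  fixes A B C E :: "nat pmf"
  shows "map_pmf (\<lambda>((a,b),(c,e)). (a+c, b+e)) (pair_pmf (pair_pmf A B) (pair_pmf C E)) =
     pair_pmf (map_pmf (\<lambda>(a,c). a+c) (pair_pmf A C)) (map_pmf (\<lambda>(b,e). b+e) (pair_pmf B E))"
proof -
  have "map_pmf (\<lambda>((a,b),(c,e)). (a+c, b+e)) (pair_pmf (pair_pmf A B) (pair_pmf C E)) =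
    do {a \<leftarrow> A; b \<leftarrow> B; c \<leftarrow> C; e \<leftarrow> E; return_pmf (a+c, b+e)}"
    by (simp add: pair_pmf_def map_pmf_def bind_assoc_pmf bind_return_pmf)
  also have "\<dots> = do {a \<leftarrow> A; c \<leftarrow> C; b \<leftarrow> B; e \<leftarrow> E; return_pmf (a+c, b+e)}"
    by (rule bind_pmf_cong[OF refl], rule bind_commute_pmf)
  also have "\<dots> = pair_pmf (map_pmf (\<lambda>(a,c). a+c) (pair_pmf A C)) (map_pmf (\<lambda>(b,e). b+e) (pair_pmf B E))"
    by (simp add: pair_pmf_def map_pmf_def bind_assoc_pmf bind_return_pmf)
  finally show ?thesis .
qed

lemma sum_Pi_polya:
  fixes r p :: real and B :: "'a set"
  assumes "finite B" "B \<noteq> {}" "r > 0" "0 < p" "p < 1"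
  shows "map_pmf (\<lambda>m. (\<Sum>j\<in>B. fst (m j), \<Sum>j\<in>B. snd (m j)))
           (Pi_pmf B d (\<lambda>_. pair_pmf (polya_pmf r p) (polya_pmf r p)))
         = pair_pmf (polya_pmf (real (card B) * r) p) (polya_pmf (real (card B) * r) p)"
  using assms(1,2)
proof (induction B rule: finite_ne_induct)
  case (singleton x)
  show ?case
    by (simp add: Pi_pmf_singleton map_pmf_comp)
next
  case (insert x B)
  let ?Q = "pair_pmf (polya_pmf r p) (polya_pmf r p)"
  let ?F = "\<lambda>B m. (\<Sum>j\<in>B. fst (m j), \<Sum>j\<in>B. snd (m j))"
  let ?G = "polya_pmf (real (card B) * r) p"
  have eq: "?F (insert x B) (f(x := y)) = (fst y + fst (?F B f), snd y + snd (?F B f))"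
    for f :: "'a \<Rightarrow> nat \<times> nat" and y :: "nat \<times> nat"
  proof -
    have "(\<Sum>j\<in>B. fst ((f(x := y)) j)) = (\<Sum>j\<in>B. fst (f j))"
         "(\<Sum>j\<in>B. snd ((f(x := y)) j)) = (\<Sum>j\<in>B. snd (f j))"
      using insert.hyps by (intro sum.cong refl; auto)+
    then show ?thesis using insert.hyps by simp
  qed
  have "map_pmf (?F (insert x B)) (Pi_pmf (insert x B) d (\<lambda>_. ?Q))
      = map_pmf (\<lambda>(y, t). (fst y + fst t, snd y + snd t)) (pair_pmf ?Q (map_pmf (?F B) (Pi_pmf B d (\<lambda>_. ?Q))))"
  proof -
    have "map_pmf (?F (insert x B)) (Pi_pmf (insert x B) d (\<lambda>_. ?Q))
       = map_pmf (?F (insert x B) \<circ> (\<lambda>(y,f). f(x:=y))) (pair_pmf ?Q (Pi_pmf B d (\<lambda>_. ?Q)))"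
      using insert.hyps by (subst Pi_pmf_insert) (simp_all only: pmf.map_comp, simp)
    also have "\<dots> = map_pmf (\<lambda>(y,f). (fst y + fst (?F B f), snd y + snd (?F B f))) (pair_pmf ?Q (Pi_pmf B d (\<lambda>_. ?Q)))"
      by (intro map_pmf_cong refl) (simp only: o_def case_prod_beta eq)
    also have "\<dots> = map_pmf (\<lambda>(y, t). (fst y + fst t, snd y + snd t)) (pair_pmf ?Q (map_pmf (?F B) (Pi_pmf B d (\<lambda>_. ?Q))))"
      by (simp add: pair_map_pmf2 pmf.map_comp o_def case_prod_unfold)
    finally show ?thesis .
  qed
  also have "\<dots> = map_pmf (\<lambda>((a,b),(c,e)). (a+c, b+e)) (pair_pmf ?Q (pair_pmf ?G ?G))"
    by (simp add: insert.IH case_prod_unfold)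
  also have "\<dots> = pair_pmf (polya_pmf (r + real (card B) * r) p) (polya_pmf (r + real (card B) * r) p)"
  proof -
    have "real (card B) * r > 0" using insert.hyps assms by (simp add: card_gt_0_iff)
    then show ?thesis by (simp add: pair_regroup polya_conv[OF assms(3) _ assms(4,5)])
  qed
  also have "r + real (card B) * r = real (card (insert x B)) * r"
    using insert.hyps by (simp add: algebra_simps)
  finally show ?case .
qed

lemma prob_le_pointwise:
  assumes "c \<ge> 0" "\<And>x. pmf M x \<le> c * pmf N x"
  shows "measure_pmf.prob M S \<le> c * measure_pmf.prob N S"
proof -
  have "measure_pmf.prob M S = infsetsum (pmf M) S" by (rule measure_pmf_conv_infsetsum)
  also have "\<dots> \<le> infsetsum (\<lambda>x. c * pmf N x) S"
    by (rule infsetsum_mono) (auto intro: assms(2))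
  also have "\<dots> = c * infsetsum (pmf N) S"
    by (rule infsetsum_cmult_right) auto
  also have "\<dots> = c * measure_pmf.prob N S" by (simp add: measure_pmf_conv_infsetsum)
  finally show ?thesis .
qed

lemma pmf_map_le:
  assumes "c \<ge> 0" "\<And>x. pmf M x \<le> c * pmf N x"
  shows "pmf (map_pmf f M) y \<le> c * pmf (map_pmf f N) y"
  using prob_le_pointwise[OF assms] by (simp add: pmf_map)

lemma geo_shift:
  fixes p :: real
  assumes "0 < p" "p < 1"
  shows "pmf (map_pmf Suc (polya_pmf 1 p)) y \<le> (1/p) * pmf (polya_pmf 1 p) y"
proof (cases y)
  case 0
  have "pmf (map_pmf Suc (polya_pmf 1 p)) 0 = 0"
  proof -
    have "Suc -` {0} = {}" by auto
    then show ?thesis by (simp add: pmf_map)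
  qed
  then show ?thesis using 0 assms by simp
next
  case (Suc k)
  have "pmf (map_pmf Suc (polya_pmf 1 p)) (Suc k) = pmf (polya_pmf 1 p) k"
    by (rule pmf_map_inj') (simp add: inj_def)
  also have "\<dots> = (1/p) * pmf (polya_pmf 1 p) (Suc k)"
    using assms by (simp add: pmf_polya_one)
  finally show ?thesis using Suc by simp
qed

definition Dg :: "real \<Rightarrow> int pmf" where
  "Dg p = map_pmf (\<lambda>(a,b). int a - int b) (pair_pmf (polya_pmf 1 p) (polya_pmf 1 p))"

lemma Dg_up:
  fixes p :: real
  assumes "0 < p" "p < 1"
  shows "pmf (Dg p) z \<le> (1/p) * pmf (Dg p) (z + 1)"
proof -
  let ?G = "polya_pmf 1 p"
  let ?h = "\<lambda>(a::nat,b::nat). int a - int b"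
  have "map_pmf ?h (pair_pmf (map_pmf Suc ?G) ?G) = map_pmf (\<lambda>v. v + 1) (Dg p)"
    by (simp add: Dg_def pair_map_pmf1 pmf.map_comp o_def case_prod_unfold algebra_simps)
  moreover have "pmf (map_pmf (\<lambda>v. v + 1) (Dg p)) (z + 1) = pmf (Dg p) z"
    by (rule pmf_map_inj') (simp add: inj_def)
  ultimately have "pmf (Dg p) z = pmf (map_pmf ?h (pair_pmf (map_pmf Suc ?G) ?G)) (z + 1)"
    by simp
  also have "\<dots> \<le> (1/p) * pmf (map_pmf ?h (pair_pmf ?G ?G)) (z + 1)"
  proof (rule pmf_map_le)
    show "0 \<le> 1/p" using assms by simp
    fix w :: "nat \<times> nat"
    show "pmf (pair_pmf (map_pmf Suc ?G) ?G) w \<le> 1 / p * pmf (pair_pmf ?G ?G) w"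
      using mult_right_mono[OF geo_shift[OF assms, of "fst w"] pmf_nonneg[of ?G "snd w"]]
      by (cases w) (simp add: pmf_pair)
  qed
  finally show ?thesis by (simp add: Dg_def)
qed

lemma Dg_down:
  fixes p :: real
  assumes "0 < p" "p < 1"
  shows "pmf (Dg p) z \<le> (1/p) * pmf (Dg p) (z - 1)"
proof -
  let ?G = "polya_pmf 1 p"
  let ?h = "\<lambda>(a::nat,b::nat). int a - int b"
  have "map_pmf ?h (pair_pmf ?G (map_pmf Suc ?G)) = map_pmf (\<lambda>v. v - 1) (Dg p)"
    by (simp add: Dg_def pair_map_pmf2 pmf.map_comp o_def case_prod_unfold algebra_simps)
  moreover have "pmf (map_pmf (\<lambda>v. v - 1) (Dg p)) (z - 1) = pmf (Dg p) z"
    by (rule pmf_map_inj') (simp add: inj_def)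
  ultimately have "pmf (Dg p) z = pmf (map_pmf ?h (pair_pmf ?G (map_pmf Suc ?G))) (z - 1)"
    by simp
  also have "\<dots> \<le> (1/p) * pmf (map_pmf ?h (pair_pmf ?G ?G)) (z - 1)"
  proof (rule pmf_map_le)
    show "0 \<le> 1/p" using assms by simp
    fix w :: "nat \<times> nat"
    show "pmf (pair_pmf ?G (map_pmf Suc ?G)) w \<le> 1 / p * pmf (pair_pmf ?G ?G) w"
      using mult_left_mono[OF geo_shift[OF assms, of "snd w"] pmf_nonneg[of ?G "fst w"]]
      by (cases w) (simp add: pmf_pair)
  qed
  finally show ?thesis by (simp add: Dg_def)
qed

lemma Pi_pmf_curry:
  fixes I :: "'i set" and B :: "'i \<Rightarrow> 'j set" and d :: 'b and q :: "'b pmf"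
  assumes fin: "finite I" "\<And>i. i \<in> I \<Longrightarrow> finite (B i)"
  shows "map_pmf (\<lambda>N i. if i \<in> I then (\<lambda>j. N (j,i)) else (\<lambda>_. d))
           (Pi_pmf {(j,i). i \<in> I \<and> j \<in> B i} d (\<lambda>_. q))
       = Pi_pmf I (\<lambda>_. d) (\<lambda>i. Pi_pmf (B i) d (\<lambda>_. q))"
proof (rule pmf_eqI)
  fix g :: "'i \<Rightarrow> 'j \<Rightarrow> 'b"
  define S where "S = {(j,i). i \<in> I \<and> j \<in> B i}"
  define cur where "cur = (\<lambda>(N::'j \<times> 'i \<Rightarrow> 'b) i. if i \<in> I then (\<lambda>j. N (j,i)) else (\<lambda>_. d))"
  have Seq: "S = (\<lambda>(i,j). (j,i)) ` Sigma I B" by (auto simp: S_def image_iff)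
  have injs: "inj_on (\<lambda>(i,j). (j,i)) (Sigma I B)" by (auto simp: inj_on_def)
  have finS: "finite S" unfolding Seq using fin by (intro finite_imageI finite_SigmaI) auto
  have lhs: "pmf (map_pmf cur (Pi_pmf S d (\<lambda>_. q))) g = measure_pmf.prob (Pi_pmf S d (\<lambda>_. q)) (cur -` {g})"
    by (simp add: pmf_map)
  show "pmf (map_pmf (\<lambda>N i. if i \<in> I then (\<lambda>j. N (j,i)) else (\<lambda>_. d))
           (Pi_pmf {(j,i). i \<in> I \<and> j \<in> B i} d (\<lambda>_. q))) g
       = pmf (Pi_pmf I (\<lambda>_. d) (\<lambda>i. Pi_pmf (B i) d (\<lambda>_. q))) g"
  proof (cases "(\<forall>i. i \<notin> I \<longrightarrow> g i = (\<lambda>_. d)) \<and> (\<forall>i j. j \<notin> B i \<longrightarrow> g i j = d)")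
    case True
    define N0 where "N0 = (\<lambda>(j,i). g i j)"
    have N0out: "N0 x = d" if "x \<notin> S" for x
      using that True by (cases x) (auto simp: N0_def S_def)
    have "measure_pmf.prob (Pi_pmf S d (\<lambda>_. q)) (cur -` {g}) = measure_pmf.prob (Pi_pmf S d (\<lambda>_. q)) {N0}"
    proof (rule measure_prob_cong_0)
      fix N assume N: "N \<in> cur -` {g} - {N0}"
      show "pmf (Pi_pmf S d (\<lambda>_. q)) N = 0"
      proof (rule pmf_Pi_outside[OF finS], rule ccontr)
        assume "\<not> (\<exists>x. x \<notin> S \<and> N x \<noteq> d)"
        then have out: "\<And>x. x \<notin> S \<Longrightarrow> N x = d" by blast
        have "N = N0"
        proof
          fix x show "N x = N0 x"
          proof (cases x)
            case (Pair j i)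
            show ?thesis
            proof (cases "x \<in> S")
              case True
              then have "i \<in> I" using Pair by (auto simp: S_def)
              then show ?thesis using N Pair by (auto simp: cur_def N0_def)
            next
              case False
              then show ?thesis using out N0out by simp
            qed
          qed
        qed
        then show False using N by simp
      qed
    next
      fix N assume "N \<in> {N0} - cur -` {g}"
      then have "cur N0 \<noteq> g" by auto
      moreover have "cur N0 = g"
        using True by (auto simp: cur_def N0_def fun_eq_iff)
      ultimately show "pmf (Pi_pmf S d (\<lambda>_. q)) N = 0" by simp
    qed
    also have "\<dots> = (\<Prod>x\<in>S. pmf q (N0 x))"
      by (simp add: measure_pmf_single pmf_Pi'[OF finS N0out])
    also have "\<dots> = (\<Prod>x\<in>Sigma I B. pmf q (g (fst x) (snd x)))"
      unfolding Seq by (subst prod.reindex[OF injs]) (auto simp: N0_def intro!: prod.cong)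
    also have "\<dots> = (\<Prod>i\<in>I. \<Prod>j\<in>B i. pmf q (g i j))"
      using fin by (subst prod.Sigma) (auto simp: case_prod_unfold)
    also have "\<dots> = (\<Prod>i\<in>I. pmf (Pi_pmf (B i) d (\<lambda>_. q)) (g i))"
      using fin True by (intro prod.cong refl) (simp add: pmf_Pi')
    also have "\<dots> = pmf (Pi_pmf I (\<lambda>_. d) (\<lambda>i. Pi_pmf (B i) d (\<lambda>_. q))) g"
      using fin True by (simp add: pmf_Pi')
    finally show ?thesis using lhs by (simp add: S_def cur_def)
  next
    case False
    have "measure_pmf.prob (Pi_pmf S d (\<lambda>_. q)) (cur -` {g}) = measure_pmf.prob (Pi_pmf S d (\<lambda>_. q)) {}"
    proof (rule measure_prob_cong_0)
      fix N assume N: "N \<in> cur -` {g} - {}"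
      show "pmf (Pi_pmf S d (\<lambda>_. q)) N = 0"
      proof (rule pmf_Pi_outside[OF finS], rule ccontr)
        assume "\<not> (\<exists>x. x \<notin> S \<and> N x \<noteq> d)"
        then have out: "\<And>x. x \<notin> S \<Longrightarrow> N x = d" by blast
        have "g = cur N" using N by simp
        then have "(\<forall>i. i \<notin> I \<longrightarrow> g i = (\<lambda>_. d)) \<and> (\<forall>i j. j \<notin> B i \<longrightarrow> g i j = d)"
          using out by (auto simp: cur_def S_def)
        then show False using False by blast
      qed
    qed simp
    then have l0: "pmf (map_pmf cur (Pi_pmf S d (\<lambda>_. q))) g = 0" using lhs by simp
    have "pmf (Pi_pmf I (\<lambda>_. d) (\<lambda>i. Pi_pmf (B i) d (\<lambda>_. q))) g = 0"
    proof (cases "\<exists>i. i \<notin> I \<and> g i \<noteq> (\<lambda>_. d)")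
      case True
      then show ?thesis by (intro pmf_Pi_outside fin)
    next
      case F2: False
      with False obtain i j where ij: "j \<notin> B i" "g i j \<noteq> d" by blast
      with F2 have iI: "i \<in> I" by auto
      have "pmf (Pi_pmf (B i) d (\<lambda>_. q)) (g i) = 0"
        using ij iI fin by (intro pmf_Pi_outside) auto
      then show ?thesis using iI fin
        by (subst pmf_Pi) (auto intro!: prod_zero bexI[of _ i])
    qed
    then show ?thesis using l0 by (simp add: S_def cur_def)
  qed
qed

theorem theorem2:
  fixes \<epsilon> :: real and K P n :: nat and J :: "'o set"
    and asg :: "'o \<Rightarrow> nat \<Rightarrow> bool" and cand :: "nat \<Rightarrow> 'c"
    and occurs :: "'c \<Rightarrow> 'd \<Rightarrow> bool"
  assumes "\<epsilon> > 0" and "K \<ge> 1" and "P \<ge> 1" and "finite J"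
    and "\<forall>i<n. card {j \<in> J. asg j i} = P"
    and "\<forall>j\<in>J. card {i. i < n \<and> asg j i} \<le> K"
  shows "\<forall>j0\<in>J. \<forall>(d :: 'o \<Rightarrow> 'd) d'. (\<forall>j. j \<noteq> j0 \<longrightarrow> d j = d' j) \<longrightarrow>
           (\<forall>Out. measure_pmf.prob (scheme_output \<epsilon> K P J n asg cand occurs d) Out
                \<le> exp \<epsilon> * measure_pmf.prob (scheme_output \<epsilon> K P J n asg cand occurs d') Out)"
proof (intro ballI allI impI)
  fix j0 and d d' :: "'o \<Rightarrow> 'd" and Out
  assume j0: "j0 \<in> J" and dd: "\<forall>j. j \<noteq> j0 \<longrightarrow> d j = d' j"
  define p where "p = exp (- \<epsilon> / real K)"
  have p0: "0 < p" unfolding p_def by simp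
  have p1: "p < 1" unfolding p_def using assms(1,2) by simp
  define Q where "Q = pair_pmf (polya_pmf (1 / real P) p) (polya_pmf (1 / real P) p)"
  define Bi where "Bi = (\<lambda>i. {j \<in> J. asg j i})"
  define Fsum where "Fsum = (\<lambda>m::'o \<Rightarrow> nat \<times> nat. \<Sum>j\<in>J. int (fst (m j)) - int (snd (m j)))"
  define Noise where "Noise = Pi_pmf {..<n} (0::int) (\<lambda>_. Dg p)"
  define c where "c = (\<lambda>(dd::'o \<Rightarrow> 'd) i. if i < n then (\<Sum>j\<in>J. if asg j i \<and> occurs (cand i) (dd j) then 1 else 0) else (0::int))"
  define cur where "cur = (\<lambda>(N::'o \<times> nat \<Rightarrow> nat \<times> nat) i. if i \<in> {..<n} then (\<lambda>j. N (j,i)) else (\<lambda>_. (0::nat,0::nat)))"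
  define S where "S = {(j,i). i \<in> {..<n} \<and> j \<in> Bi i}"
  have finB: "finite (Bi i)" for i using assms(4) by (auto simp: Bi_def)
  have S_eq: "{(j, i). j \<in> J \<and> i < n \<and> asg j i} = S" by (auto simp: S_def Bi_def)
  have finS: "finite S"
  proof -
    have "S \<subseteq> J \<times> {..<n}" by (auto simp: S_def Bi_def)
    then show ?thesis by (rule finite_subset) (simp add: assms(4))
  qed
  have curry: "map_pmf cur (Pi_pmf S (0,0) (\<lambda>_. Q)) = Pi_pmf {..<n} (\<lambda>_. (0,0)) (\<lambda>i. Pi_pmf (Bi i) (0,0) (\<lambda>_. Q))"
    unfolding cur_def S_def by (rule Pi_pmf_curry[of "{..<n}" Bi "(0::nat,0::nat)" Q]) (simp_all add: finB)
  have DgEq: "map_pmf Fsum (Pi_pmf (Bi i) (0,0) (\<lambda>_. Q)) = Dg p" if i: "i < n" for i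
  proof -
    have cardB: "card (Bi i) = P" using assms(5) i unfolding Bi_def by blast
    have ne: "Bi i \<noteq> {}"
    proof
      assume "Bi i = {}"
      then have "card (Bi i) = 0" by (simp only: card.empty)
      then show False using cardB assms(3) by linarith
    qed
    have "map_pmf Fsum (Pi_pmf (Bi i) (0,0) (\<lambda>_. Q)) =
       map_pmf ((\<lambda>(a,b). int a - int b) \<circ> (\<lambda>m. (\<Sum>j\<in>Bi i. fst (m j), \<Sum>j\<in>Bi i. snd (m j)))) (Pi_pmf (Bi i) (0,0) (\<lambda>_. Q))"
    proof (rule map_pmf_cong[OF refl])
      fix m assume "m \<in> set_pmf (Pi_pmf (Bi i) (0,0) (\<lambda>_. Q))"
      then have "m \<in> {f. \<forall>x. x \<notin> Bi i \<longrightarrow> f x = (0,0)}"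
        by (rule subsetD[OF set_Pi_pmf_subset[OF finB[of i]]])
      then have m0: "\<And>j. j \<notin> Bi i \<Longrightarrow> m j = (0,0)" by simp
      have "Fsum m = (\<Sum>j\<in>Bi i. int (fst (m j)) - int (snd (m j)))"
        unfolding Fsum_def using assms(4) m0
        by (intro sum.mono_neutral_right) (auto simp: Bi_def)
      also have "\<dots> = int (\<Sum>j\<in>Bi i. fst (m j)) - int (\<Sum>j\<in>Bi i. snd (m j))"
        by (simp add: sum_subtractf)
      finally show "Fsum m = ((\<lambda>(a,b). int a - int b) \<circ> (\<lambda>m. (\<Sum>j\<in>Bi i. fst (m j), \<Sum>j\<in>Bi i. snd (m j)))) m"
        by simp
    qed
    also have "\<dots> = map_pmf (\<lambda>(a,b). int a - int b) (map_pmf (\<lambda>m. (\<Sum>j\<in>Bi i. fst (m j), \<Sum>j\<in>Bi i. snd (m j))) (Pi_pmf (Bi i) (0,0) (\<lambda>_. Q)))"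
      by (simp add: pmf.map_comp)
    also have "\<dots> = map_pmf (\<lambda>(a,b). int a - int b) (pair_pmf (polya_pmf (real (card (Bi i)) * (1 / real P)) p) (polya_pmf (real (card (Bi i)) * (1 / real P)) p))"
      unfolding Q_def using assms(3) p0 p1 ne finB[of i]
      by (subst sum_Pi_polya) auto
    also have "\<dots> = Dg p"
      using cardB assms(3) by (simp add: Dg_def)
    finally show ?thesis .
  qed
  have NoiseEq: "Noise = map_pmf (\<lambda>h. Fsum \<circ> h) (Pi_pmf {..<n} (\<lambda>_. (0,0)) (\<lambda>i. Pi_pmf (Bi i) (0,0) (\<lambda>_. Q)))"
  proof -
    have "Noise = Pi_pmf {..<n} 0 (\<lambda>i. map_pmf Fsum (Pi_pmf (Bi i) (0,0) (\<lambda>_. Q)))"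
      unfolding Noise_def by (rule Pi_pmf_cong) (auto simp: DgEq)
    also have "\<dots> = map_pmf (\<lambda>h. Fsum \<circ> h) (Pi_pmf {..<n} (\<lambda>_. (0,0)) (\<lambda>i. Pi_pmf (Bi i) (0,0) (\<lambda>_. Q)))"
      by (rule Pi_pmf_map) (auto simp: Fsum_def)
    finally show ?thesis .
  qed
  have outEq: "scheme_output \<epsilon> K P J n asg cand occurs dd = map_pmf (\<lambda>v i. c dd i + v i) Noise" for dd
  proof -
    have "map_pmf (\<lambda>v i. c dd i + v i) Noise = map_pmf (\<lambda>N i. c dd i + Fsum (cur N i)) (Pi_pmf S (0,0) (\<lambda>_. Q))"
    proof -
      have "Noise = map_pmf (\<lambda>h. Fsum \<circ> h) (map_pmf cur (Pi_pmf S (0,0) (\<lambda>_. Q)))"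
        by (simp only: NoiseEq curry)
      also have "\<dots> = map_pmf (\<lambda>N. Fsum \<circ> cur N) (Pi_pmf S (0,0) (\<lambda>_. Q))"
        by (simp only: pmf.map_comp comp_def)
      finally have "map_pmf (\<lambda>v i. c dd i + v i) Noise = map_pmf ((\<lambda>v i. c dd i + v i) \<circ> (\<lambda>N. Fsum \<circ> cur N)) (Pi_pmf S (0,0) (\<lambda>_. Q))"
        by (simp only: pmf.map_comp)
      then show ?thesis by (simp only: o_def)
    qed
    also have "\<dots> = scheme_output \<epsilon> K P J n asg cand occurs dd"
      unfolding scheme_output_def S_eq p_def[symmetric] Q_def[symmetric]
    proof (rule map_pmf_cong[OF refl])
      fix N assume "N \<in> set_pmf (Pi_pmf S (0,0) (\<lambda>_. Q))"
      then have "N \<in> {f. \<forall>x. x \<notin> S \<longrightarrow> f x = (0,0)}"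
        by (rule subsetD[OF set_Pi_pmf_subset[OF finS]])
      then have N0: "\<And>x. x \<notin> S \<Longrightarrow> N x = (0,0)" by (simp del: split_paired_All)
      show "(\<lambda>i. c dd i + Fsum (cur N i)) = (\<lambda>i. if i < n then
                 (\<Sum>j\<in>J. if asg j i then
                    (if occurs (cand i) (dd j) then 1 else 0)
                    + int (fst (N (j, i))) - int (snd (N (j, i)))
                  else 0)
               else 0)"
      proof
        fix i
        show "c dd i + Fsum (cur N i) = (if i < n then
                 (\<Sum>j\<in>J. if asg j i then
                    (if occurs (cand i) (dd j) then 1 else 0)
                    + int (fst (N (j, i))) - int (snd (N (j, i)))
                  else 0)
               else 0)"
        proof (cases "i < n")
          case True
          have "c dd i + Fsum (cur N i) = (\<Sum>j\<in>J. (if asg j i \<and> occurs (cand i) (dd j) then 1 else 0) + (int (fst (N (j, i))) - int (snd (N (j, i)))))"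
          proof -
            have "cur N i = (\<lambda>j. N (j,i))" by (simp only: cur_def lessThan_iff if_P[OF True])
            moreover have "c dd i = (\<Sum>j\<in>J. if asg j i \<and> occurs (cand i) (dd j) then 1 else 0)"
              by (simp only: c_def if_P[OF True])
            ultimately show ?thesis by (simp only: Fsum_def sum.distrib)
          qed
          also have "\<dots> = (\<Sum>j\<in>J. if asg j i then
                    (if occurs (cand i) (dd j) then 1 else 0)
                    + int (fst (N (j, i))) - int (snd (N (j, i)))
                  else 0)"
          proof (rule sum.cong[OF refl])
            fix j assume "j \<in> J"
            show "(if asg j i \<and> occurs (cand i) (dd j) then 1 else 0) + (int (fst (N (j, i))) - int (snd (N (j, i)))) =
                  (if asg j i then (if occurs (cand i) (dd j) then 1 else 0) + int (fst (N (j, i))) - int (snd (N (j, i))) else 0)"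
            proof (cases "asg j i")
              case False
              then have "(j,i) \<notin> S" by (auto simp: S_def Bi_def)
              then show ?thesis using N0 False by simp
            qed simp
          qed
          finally show ?thesis using True by simp
        next
          case False
          then show ?thesis by (simp add: c_def Fsum_def cur_def)
        qed
      qed
    qed
    finally show ?thesis by simp
  qed
  have pmfout: "pmf (scheme_output \<epsilon> K P J n asg cand occurs dd) z = pmf Noise (\<lambda>i. z i - c dd i)" for dd z
  proof -
    have inj: "inj (\<lambda>v i. c dd i + v i)" by (auto simp: inj_def fun_eq_iff)
    have oeq: "z = (\<lambda>i. c dd i + (\<lambda>i. z i - c dd i) i)" by simp
    have "pmf (map_pmf (\<lambda>v i. c dd i + v i) Noise) ((\<lambda>v i. c dd i + v i) (\<lambda>i. z i - c dd i)) = pmf Noise (\<lambda>i. z i - c dd i)"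
      by (rule pmf_map_inj'[OF inj])
    then show ?thesis using outEq[of dd] oeq by simp
  qed
  have pmfNoise: "pmf Noise w = (if \<forall>i. i \<notin> {..<n} \<longrightarrow> w i = 0 then \<Prod>i\<in>{..<n}. pmf (Dg p) (w i) else 0)" for w
    unfolding Noise_def by (rule pmf_Pi) simp
  define t where "t = (\<lambda>(dd::'o \<Rightarrow> 'd) j i. if asg j i \<and> occurs (cand i) (dd j) then 1 else (0::int))"
  have crel: "c d i = c d' i + (t d j0 i - t d' j0 i)" if i: "i < n" for i
  proof -
    have cdd: "c dd i = t dd j0 i + (\<Sum>j\<in>J - {j0}. t dd j i)" for dd
      using i j0 assms(4) by (simp add: c_def t_def sum.remove)
    have "(\<Sum>j\<in>J - {j0}. t d j i) = (\<Sum>j\<in>J - {j0}. t d' j i)"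
      using dd by (intro sum.cong refl) (simp add: t_def)
    then show ?thesis using cdd[of d] cdd[of d'] by simp
  qed
  have p_le1: "1 \<le> 1 / p" using p0 p1 by simp
  have factor: "pmf (Dg p) (z i - c d i) \<le> (if asg j0 i then 1/p else 1) * pmf (Dg p) (z i - c d' i)"
    if i: "i < n" for i z
  proof (cases "asg j0 i")
    case False
    then have "c d i = c d' i" using crel[OF i] by (simp add: t_def)
    then show ?thesis using False by simp
  next
    case True
    have "t d j0 i - t d' j0 i \<in> {-1, 0, 1}" by (auto simp: t_def)
    then consider "t d j0 i - t d' j0 i = 0" | "t d j0 i - t d' j0 i = 1" | "t d j0 i - t d' j0 i = -1" by blast
    then show ?thesis
    proof cases
      case 1
      then have "c d i = c d' i" using crel[OF i] by simp
      then show ?thesis using True p_le1 mult_right_mono[OF p_le1 pmf_nonneg[of "Dg p" "z i - c d' i"]] by simp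
    next
      case 2
      then have e: "z i - c d' i = (z i - c d i) + 1" using crel[OF i] by simp
      show ?thesis using True Dg_up[OF p0 p1, of "z i - c d i"] unfolding e by simp
    next
      case 3
      then have e: "z i - c d' i = (z i - c d i) - 1" using crel[OF i] by simp
      show ?thesis using True Dg_down[OF p0 p1, of "z i - c d i"] unfolding e by simp
    qed
  qed
  have powK: "(1/p) ^ K = exp \<epsilon>"
  proof -
    have "1/p = exp (\<epsilon> / real K)" unfolding p_def by (simp add: exp_minus field_simps)
    then have "(1/p) ^ K = exp (real K * (\<epsilon> / real K))" by (simp only: exp_of_nat_mult)
    also have "real K * (\<epsilon> / real K) = \<epsilon>" using assms(2) by simp
    finally show ?thesis .
  qed
  have pw: "pmf (scheme_output \<epsilon> K P J n asg cand occurs d) z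
       \<le> exp \<epsilon> * pmf (scheme_output \<epsilon> K P J n asg cand occurs d') z" for z
  proof -
    have c_out: "c dd i = 0" if "i \<notin> {..<n}" for dd i using that by (simp add: c_def)
    show ?thesis
    proof (cases "\<forall>i. i \<notin> {..<n} \<longrightarrow> z i = 0")
      case False
      then have "\<not> (\<forall>i. i \<notin> {..<n} \<longrightarrow> z i - c d i = 0)" using c_out by simp
      then have "pmf (scheme_output \<epsilon> K P J n asg cand occurs d) z = 0"
        unfolding pmfout pmfNoise by (rule if_not_P)
      then show ?thesis by simp
    next
      case True
      then have T1: "\<forall>i. i \<notin> {..<n} \<longrightarrow> z i - c dd i = 0" for dd using c_out by simp
      have "pmf (scheme_output \<epsilon> K P J n asg cand occurs d) z = (\<Prod>i\<in>{..<n}. pmf (Dg p) (z i - c d i))"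
        using T1[of d] by (simp add: pmfout pmfNoise)
      also have "\<dots> \<le> (\<Prod>i\<in>{..<n}. (if asg j0 i then 1/p else 1) * pmf (Dg p) (z i - c d' i))"
        by (intro prod_mono conjI pmf_nonneg factor) simp
      also have "\<dots> = (\<Prod>i\<in>{..<n}. (if asg j0 i then 1/p else 1)) * (\<Prod>i\<in>{..<n}. pmf (Dg p) (z i - c d' i))"
        by (rule prod.distrib)
      also have "(\<Prod>i\<in>{..<n}. (if asg j0 i then 1/p else 1)) = (1/p) ^ card {i. i < n \<and> asg j0 i}"
      proof -
        have "(\<Prod>i\<in>{..<n}. (if asg j0 i then 1/p else 1)) = (\<Prod>i\<in>{i. i < n \<and> asg j0 i}. 1/p)"
          by (subst prod.inter_filter[symmetric]) (auto intro!: prod.cong)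
        then show ?thesis by simp
      qed
      also have "(1/p) ^ card {i. i < n \<and> asg j0 i} \<le> (1/p) ^ K"
        using assms(6) j0 p_le1 by (intro power_increasing) auto
      also have "(\<Prod>i\<in>{..<n}. pmf (Dg p) (z i - c d' i)) = pmf (scheme_output \<epsilon> K P J n asg cand occurs d') z"
        using T1[of d'] by (simp add: pmfout pmfNoise)
      finally show ?thesis
        using powK mult_right_mono[OF _ prod_nonneg[of "{..<n}" "\<lambda>i. pmf (Dg p) (z i - c d' i)"]] by simp
    qed
  qed
  show "measure_pmf.prob (scheme_output \<epsilon> K P J n asg cand occurs d) Out
                \<le> exp \<epsilon> * measure_pmf.prob (scheme_output \<epsilon> K P J n asg cand occurs d') Out"
    by (rule prob_le_pointwise) (simp_all add: pw)
qed

end
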